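(* Let $S\subset\mathbb{R}^3$ be the sphere of radius $1/2$ centered at $(0,0,1/2)$, and let $\pi_S:\mathbb{R}^2\to S$ be the stereographic projection (identifying $\mathbb{R}^2$ with the plane $z=0$, a point $(x,y,0)$ is mapped to the intersection point, other than $N=(0,0,1)$, of $S$ with the line through $N$ and $(x,y,0)$). Let $A\subset\mathbb{R}^2$ be an unbounded set with $0\notin\overline A$. Then $\overline{\dim}_BA=\overline{\dim}_B\pi_S(A)$ and $\underline{\dim}_BA=\underline{\dim}_B\pi_S(A)$, where the box dimensions of $\pi_S(A)$ are computed as a subset of $\mathbb{R}^3$. Furthermore, if $A$ is Minkowski nondegenerate, then so is $\pi_S(A)$.
   Context: For a nonempty bounded $B\subset\mathbb{R}^n$, with $B_\varepsilon$ its Euclidean $\varepsilon$-neighbourhood in $\mathbb{R}^n$ and $|B_\varepsilon|$ its Lebesgue measure, $\mathcal M^{*s}(B)=\limsup_{\varepsilon\to0}|B_\varepsilon|/\varepsilon^{n-s}$, $\mathcal M_*^s(B)$ is the same with $\liminf$, $\overline{\dim}_BB=\inf\{s\ge0:\mathcal M^{*s}(B)=0\}$, $\underline{\dim}_BB=\inf\{s\ge0:\mathcal M_*^{s}(B)=0\}$; $B$ is Minkowski nondegenerate if there is $d\ge0$ with $0<\mathcal M_*^d(B)\le\mathcal M^{*d}(B)<\infty$. For an unbounded $A\subset\mathbb{R}^n$ with $0\notin\overline A$, with $\Phi(x)=x/|x|^2$, the box dimensions, Minkowski contents and Minkowski nondegeneracy of $A$ are defined as those of the bounded set $\Phi(A)$.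 *)

theory Defs
  imports "HOL-Analysis.Analysis"
begin

definition nbhd :: "'a::euclidean_space set \<Rightarrow> real \<Rightarrow> 'a set" where
  "nbhd B e = {x. \<exists>b\<in>B. dist x b < e}"

definition upper_mink :: "real \<Rightarrow> 'a::euclidean_space set \<Rightarrow> ereal" where
  "upper_mink s B = Limsup (at_right 0)
     (\<lambda>e. ereal (measure lebesgue (nbhd B e) / e powr (real DIM('a) - s)))"

definition lower_mink :: "real \<Rightarrow> 'a::euclidean_space set \<Rightarrow> ereal" where
  "lower_mink s B = Liminf (at_right 0)
     (\<lambda>e. ereal (measure lebesgue (nbhd B e) / e powr (real DIM('a) - s)))"

definition upper_box_dim :: "'a::euclidean_space set \<Rightarrow> real" where
  "upper_box_dim B = Inf {s. s \<ge> 0 \<and> upper_mink s B = 0}"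

definition lower_box_dim :: "'a::euclidean_space set \<Rightarrow> real" where
  "lower_box_dim B = Inf {s. s \<ge> 0 \<and> lower_mink s B = 0}"

definition mink_nondeg :: "'a::euclidean_space set \<Rightarrow> bool" where
  "mink_nondeg B \<longleftrightarrow> (\<exists>d\<ge>0. 0 < lower_mink d B \<and> lower_mink d B \<le> upper_mink d B
                          \<and> upper_mink d B < \<infinity>)"

definition inversion :: "'a::euclidean_space \<Rightarrow> 'a" where
  "inversion x = (1 / norm x ^ 2) *\<^sub>R x"

definition upper_box_dim_unb :: "'a::euclidean_space set \<Rightarrow> real" where
  "upper_box_dim_unb A = upper_box_dim (inversion ` A)"

definition lower_box_dim_unb :: "'a::euclidean_space set \<Rightarrow> real" where
  "lower_box_dim_unb A = lower_box_dim (inversion ` A)"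

definition mink_nondeg_unb :: "'a::euclidean_space set \<Rightarrow> bool" where
  "mink_nondeg_unb A \<longleftrightarrow> mink_nondeg (inversion ` A)"

definition north :: "real^3" where "north = vector [0, 0, 1]"

definition sphereS :: "(real^3) set" where
  "sphereS = sphere (vector [0, 0, 1/2]) (1/2)"

definition embed_plane :: "real^2 \<Rightarrow> real^3" where
  "embed_plane p = vector [p$1, p$2, 0]"

definition stereo :: "real^2 \<Rightarrow> real^3" where
  "stereo p = (THE q. q \<in> sphereS \<and> q \<noteq> north \<and>
                 (\<exists>t::real. q = north + t *\<^sub>R (embed_plane p - north)))"

end

theory Submission
  imports Defs
begin

lemma ball_meas: fixes c :: "'a::euclidean_space" assumes "r \<ge> 0"
  shows "measure lebesgue (ball c r) = r ^ DIM('a) * measure lebesgue (ball (0::'a) 1)"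
  using content_ball_conv_unit_ball[OF assms, of c] by simp
lemma ball_meas_pos: "measure lebesgue (ball (0::'a::euclidean_space) 1) > 0"
  using content_ball_pos[of 1 "0::'a"] by simp

lemma meas_disj_balls:
  fixes c :: "'i \<Rightarrow> 'a::euclidean_space"
  assumes "finite P" "\<forall>p\<in>P. \<forall>q\<in>P. p \<noteq> q \<longrightarrow> 2*r \<le> dist (c p) (c q)" "r \<ge> 0"
  shows "measure lebesgue (\<Union>p\<in>P. ball (c p) r) = real (card P) * (r ^ DIM('a) * measure lebesgue (ball (0::'a) 1))"
proof -
  have "measure lebesgue (\<Union>p\<in>P. ball (c p) r) = (\<Sum>p\<in>P. measure lebesgue (ball (c p) r))"
  proof (rule measure_UNION')
    show "pairwise (\<lambda>i j. disjnt (ball (c i) r) (ball (c j) r)) P"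
      unfolding pairwise_def disjnt_def
    proof (intro ballI impI)
      fix i j assume ij: "i \<in> P" "j \<in> P" "i \<noteq> j"
      show "ball (c i) r \<inter> ball (c j) r = {}"
      proof (rule ccontr)
        assume "ball (c i) r \<inter> ball (c j) r \<noteq> {}"
        then obtain x where "dist (c i) x < r" "dist (c j) x < r" by auto
        then have "dist (c i) (c j) < 2*r" using dist_triangle3[of "c i" "c j" x] by (simp add: dist_commute)
        with assms(2) ij show False by fastforce
      qed
    qed
  qed (use assms in auto)
  also have "\<dots> = (\<Sum>p\<in>P. r ^ DIM('a) * measure lebesgue (ball (0::'a) 1))"
    by (rule sum.cong[OF refl]) (rule ball_meas[OF assms(3)])
  also have "\<dots> = real (card P) * (r ^ DIM('a) * measure lebesgue (ball (0::'a) 1))"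
    by simp
  finally show ?thesis .
qed

lemma meas_cover_balls:
  fixes c :: "'i \<Rightarrow> 'a::euclidean_space"
  assumes "finite P" "r \<ge> 0"
  shows "measure lebesgue (\<Union>p\<in>P. ball (c p) r) \<le> real (card P) * (r ^ DIM('a) * measure lebesgue (ball (0::'a) 1))"
proof -
  have "measure lebesgue (\<Union>p\<in>P. ball (c p) r) \<le> (\<Sum>p\<in>P. measure lebesgue (ball (c p) r))"
    by (rule measure_UNION_le) (use assms in auto)
  also have "\<dots> = (\<Sum>p\<in>P. r ^ DIM('a) * measure lebesgue (ball (0::'a) 1))"
    by (rule sum.cong[OF refl]) (rule ball_meas[OF assms(2)])
  also have "\<dots> = real (card P) * (r ^ DIM('a) * measure lebesgue (ball (0::'a) 1))"
    by simp
  finally show ?thesis .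
qed

lemma nbhd_eq: "nbhd B e = (\<Union>b\<in>B. ball b e)"
  unfolding nbhd_def by (auto simp: dist_commute)

lemma nbhd_lmeas: assumes "bounded B" shows "nbhd B e \<in> lmeasurable"
proof -
  have "bounded (nbhd B e)"
  proof -
    obtain R where R: "\<forall>x\<in>B. norm x \<le> R" using assms bounded_iff by blast
    have "\<forall>x\<in>nbhd B e. norm x \<le> R + e"
    proof
      fix x assume "x \<in> nbhd B e"
      then obtain b where "b \<in> B" "dist x b < e" unfolding nbhd_def by auto
      moreover have "norm x \<le> norm b + norm (x - b)" by (rule norm_triangle_sub)
      moreover have "norm b \<le> R" using R \<open>b \<in> B\<close> by auto
      ultimately show "norm x \<le> R + e" by (simp add: dist_norm)
    qed
    then show ?thesis using bounded_iff by blast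
  qed
  moreover have "open (nbhd B e)" unfolding nbhd_eq by auto
  ultimately show ?thesis by (rule lmeasurable_open)
qed

lemma packing:
  fixes B :: "'a::euclidean_space set"
  assumes "bounded B" "d > 0"
  shows "\<exists>P. finite P \<and> P \<subseteq> B \<and> (\<forall>p\<in>P. \<forall>q\<in>P. p \<noteq> q \<longrightarrow> d \<le> dist p q) \<and> (\<forall>x\<in>B. \<exists>p\<in>P. dist x p < d)"
proof -
  define Sep where "Sep Q \<longleftrightarrow> finite Q \<and> Q \<subseteq> B \<and> (\<forall>p\<in>Q. \<forall>q\<in>Q. p \<noteq> q \<longrightarrow> d \<le> dist p q)" for Q
  define V where "V = measure lebesgue (ball (0::'a) 1)"
  have V: "V > 0" unfolding V_def by (rule ball_meas_pos)
  obtain R where R: "R > 0" "\<forall>x\<in>B. norm x \<le> R" using assms(1) bounded_pos by blast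
  define M where "M = nat \<lceil>(R+d)^DIM('a) / (d/2)^DIM('a)\<rceil> + 1"
  have bnd: "card Q < M" if "Sep Q" for Q
  proof -
    have sub: "(\<Union>p\<in>Q. ball p (d/2)) \<subseteq> ball 0 (R+d)"
    proof
      fix x assume "x \<in> (\<Union>p\<in>Q. ball p (d/2))"
      then obtain p where "p \<in> Q" "dist p x < d/2" by auto
      with that R have "norm p \<le> R" unfolding Sep_def by auto
      with \<open>dist p x < d/2\<close> have "norm x < R + d"
        using norm_triangle_sub[of x p] assms(2) by (simp add: dist_norm norm_minus_commute)
      then show "x \<in> ball 0 (R+d)" by simp
    qed
    have "real (card Q) * ((d/2) ^ DIM('a) * V) = measure lebesgue (\<Union>p\<in>Q. ball p (d/2))"
      unfolding V_def using that unfolding Sep_def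
      by (intro meas_disj_balls[symmetric, where c="\<lambda>x. x"]) (use assms in auto)
    also have "\<dots> \<le> measure lebesgue (ball (0::'a) (R+d))"
      by (rule measure_mono_fmeasurable[OF sub]) (use that in \<open>auto simp: Sep_def intro!: sets.finite_UN\<close>)
    also have "\<dots> = (R+d)^DIM('a) * V" unfolding V_def using R assms by (intro ball_meas) auto
    finally have "real (card Q) * (d/2) ^ DIM('a) \<le> (R+d)^DIM('a)" using V by (simp add: mult.assoc)
    then have "real (card Q) \<le> (R+d)^DIM('a) / (d/2) ^ DIM('a)" using assms(2) by (simp add: field_simps)
    then have "real (card Q) < real M" unfolding M_def by linarith
    then show ?thesis by simp
  qed
  have "Sep {}" unfolding Sep_def by auto
  from ex_has_greatest_nat[of Sep "{}" card M, OF this] bnd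
  obtain P where P: "Sep P" "\<And>Q. Sep Q \<Longrightarrow> card Q \<le> card P" by blast
  have "\<forall>x\<in>B. \<exists>p\<in>P. dist x p < d"
  proof (rule ccontr)
    assume "\<not> ?thesis"
    then obtain x where x: "x \<in> B" "\<forall>p\<in>P. d \<le> dist x p" by (auto simp: not_less)
    then have xP: "x \<notin> P" using assms(2) by force
    have "Sep (insert x P)" using P(1) x unfolding Sep_def by (auto simp: dist_commute)
    then have "card (insert x P) \<le> card P" by (rule P(2))
    with xP P(1) show False unfolding Sep_def by simp
  qed
  with P(1) show ?thesis unfolding Sep_def by blast
qed

lemma open_sets_leb: "open S \<Longrightarrow> S \<in> sets lebesgue"
  by (metis borel_open sets_completionI_sets sets_lborel)

lemma nbhd_sets: "nbhd B e \<in> sets lebesgue"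
  by (rule open_sets_leb) (auto simp: nbhd_eq)

lemma cmp_up:
  fixes B :: "'a::euclidean_space set" and h :: "'a \<Rightarrow> 'b::euclidean_space"
  assumes "bounded B" "b \<ge> 0" "\<forall>u\<in>B. \<forall>v\<in>B. dist (h u) (h v) \<le> b * dist u v" "e > 0"
  shows "measure lebesgue (nbhd (h`B) e) * e^DIM('a) \<le>
    ((1+b)^DIM('b) * measure lebesgue (ball (0::'b) 1) * 2^DIM('a) / measure lebesgue (ball (0::'a) 1))
      * e^DIM('b) * measure lebesgue (nbhd B e)"
proof -
  define Va where "Va = measure lebesgue (ball (0::'a) 1)"
  define Vb where "Vb = measure lebesgue (ball (0::'b) 1)"
  have Va: "Va > 0" and Vb: "Vb > 0" unfolding Va_def Vb_def by (rule ball_meas_pos)+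
  obtain P where P: "finite P" "P \<subseteq> B" "\<forall>p\<in>P. \<forall>q\<in>P. p \<noteq> q \<longrightarrow> e \<le> dist p q"
    "\<forall>x\<in>B. \<exists>p\<in>P. dist x p < e" using packing[OF assms(1) assms(4)] by blast
  have cov: "nbhd (h`B) e \<subseteq> (\<Union>p\<in>P. ball (h p) ((1+b)*e))"
  proof
    fix x assume "x \<in> nbhd (h`B) e"
    then obtain y where y: "y \<in> B" "dist x (h y) < e" unfolding nbhd_def by auto
    then obtain p where p: "p \<in> P" "dist y p < e" using P(4) by blast
    have "dist (h y) (h p) \<le> b * dist y p" using assms(3) y(1) p(1) P(2) by blast
    also have "\<dots> \<le> b * e" using p(2) assms(2) by (simp add: mult_left_mono)
    finally have "dist (h p) x < (1+b)*e" using y(2) dist_triangle[of "h p" x "h y"]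
      by (simp add: dist_commute algebra_simps)
    with p(1) show "x \<in> (\<Union>p\<in>P. ball (h p) ((1+b)*e))" by auto
  qed
  have m1: "measure lebesgue (nbhd (h`B) e) \<le> real (card P) * (((1+b)*e)^DIM('b) * Vb)"
  proof -
    have "measure lebesgue (nbhd (h`B) e) \<le> measure lebesgue (\<Union>p\<in>P. ball (h p) ((1+b)*e))"
      by (rule measure_mono_fmeasurable[OF cov nbhd_sets]) (use P(1) in \<open>auto intro!: fmeasurable.finite_UN\<close>)
    also have "\<dots> \<le> real (card P) * (((1+b)*e)^DIM('b) * Vb)"
      unfolding Vb_def by (rule meas_cover_balls) (use P(1) assms in auto)
    finally show ?thesis .
  qed
  have sub: "(\<Union>p\<in>P. ball p (e/2)) \<subseteq> nbhd B e"
    using P(2) assms(4) unfolding nbhd_def by (force simp: dist_commute)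
  have m2: "real (card P) * ((e/2)^DIM('a) * Va) \<le> measure lebesgue (nbhd B e)"
  proof -
    have "real (card P) * ((e/2)^DIM('a) * Va) = measure lebesgue (\<Union>p\<in>P. ball p (e/2))"
      unfolding Va_def using P by (intro meas_disj_balls[symmetric, where c="\<lambda>x. x"]) (use assms in auto)
    also have "\<dots> \<le> measure lebesgue (nbhd B e)"
      by (rule measure_mono_fmeasurable[OF sub]) (use P(1) assms(1) nbhd_lmeas in \<open>auto intro!: sets.finite_UN\<close>)
    finally show ?thesis .
  qed
  have "measure lebesgue (nbhd (h`B) e) * e^DIM('a) \<le> real (card P) * (((1+b)*e)^DIM('b) * Vb) * e^DIM('a)"
    using m1 assms(4) by (simp add: mult_right_mono)
  also have "\<dots> = ((1+b)^DIM('b) * Vb * 2^DIM('a) / Va) * e^DIM('b) * (real (card P) * ((e/2)^DIM('a) * Va))"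
    unfolding power_mult_distrib power_divide using Va by (simp add: field_simps)
  also have "\<dots> \<le> ((1+b)^DIM('b) * Vb * 2^DIM('a) / Va) * e^DIM('b) * measure lebesgue (nbhd B e)"
    by (rule mult_left_mono[OF m2]) (use Va Vb assms(2,4) in auto)
  finally show ?thesis unfolding Va_def Vb_def .
qed

lemma cmp_down:
  fixes B :: "'a::euclidean_space set" and h :: "'a \<Rightarrow> 'b::euclidean_space"
  assumes "bounded B" "a > 0" "\<forall>u\<in>B. \<forall>v\<in>B. a * dist u v \<le> dist (h u) (h v)" "e > 0"
    "bounded (h`B)"
  shows "measure lebesgue (nbhd B e) * ((a*e/2)^DIM('b) * measure lebesgue (ball (0::'b) 1)) \<le>
    (2*e)^DIM('a) * measure lebesgue (ball (0::'a) 1) * measure lebesgue (nbhd (h`B) (a*e/2))"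
proof -
  define Va where "Va = measure lebesgue (ball (0::'a) 1)"
  define Vb where "Vb = measure lebesgue (ball (0::'b) 1)"
  have Va: "Va > 0" and Vb: "Vb > 0" unfolding Va_def Vb_def by (rule ball_meas_pos)+
  obtain P where P: "finite P" "P \<subseteq> B" "\<forall>p\<in>P. \<forall>q\<in>P. p \<noteq> q \<longrightarrow> e \<le> dist p q"
    "\<forall>x\<in>B. \<exists>p\<in>P. dist x p < e" using packing[OF assms(1) assms(4)] by blast
  have cov: "nbhd B e \<subseteq> (\<Union>p\<in>P. ball p (2*e))"
  proof
    fix x assume "x \<in> nbhd B e"
    then obtain y where y: "y \<in> B" "dist x y < e" unfolding nbhd_def by auto
    then obtain p where p: "p \<in> P" "dist y p < e" using P(4) by blast
    have "dist p x < 2*e" using y(2) p(2) dist_triangle[of p x y] by (simp add: dist_commute)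
    with p(1) show "x \<in> (\<Union>p\<in>P. ball p (2*e))" by auto
  qed
  have m1: "measure lebesgue (nbhd B e) \<le> real (card P) * ((2*e)^DIM('a) * Va)"
  proof -
    have "measure lebesgue (nbhd B e) \<le> measure lebesgue (\<Union>p\<in>P. ball p (2*e))"
      by (rule measure_mono_fmeasurable[OF cov nbhd_sets]) (use P(1) in \<open>auto intro!: fmeasurable.finite_UN\<close>)
    also have "\<dots> \<le> real (card P) * ((2*e)^DIM('a) * Va)"
      unfolding Va_def by (rule meas_cover_balls) (use P(1) assms in auto)
    finally show ?thesis .
  qed
  have sub: "(\<Union>p\<in>P. ball (h p) (a*e/2)) \<subseteq> nbhd (h`B) (a*e/2)"
    using P(2) assms(2,4) unfolding nbhd_def by (force simp: dist_commute)
  have sep: "\<forall>p\<in>P. \<forall>q\<in>P. p \<noteq> q \<longrightarrow> 2*(a*e/2) \<le> dist (h p) (h q)"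
  proof (intro ballI impI)
    fix p q assume pq: "p \<in> P" "q \<in> P" "p \<noteq> q"
    then have "a * e \<le> a * dist p q" using P(3) assms(2) by (simp add: mult_left_mono)
    also have "\<dots> \<le> dist (h p) (h q)" using assms(3) pq P(2) by blast
    finally show "2*(a*e/2) \<le> dist (h p) (h q)" by simp
  qed
  have m2: "real (card P) * ((a*e/2)^DIM('b) * Vb) \<le> measure lebesgue (nbhd (h`B) (a*e/2))"
  proof -
    have "real (card P) * ((a*e/2)^DIM('b) * Vb) = measure lebesgue (\<Union>p\<in>P. ball (h p) (a*e/2))"
      unfolding Vb_def using P(1) sep by (intro meas_disj_balls[symmetric]) (use assms in auto)
    also have "\<dots> \<le> measure lebesgue (nbhd (h`B) (a*e/2))"
      by (rule measure_mono_fmeasurable[OF sub]) (use P(1) assms(5) nbhd_lmeas in \<open>auto intro!: sets.finite_UN\<close>)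
    finally show ?thesis .
  qed
  have "measure lebesgue (nbhd B e) * ((a*e/2)^DIM('b) * Vb) \<le> real (card P) * ((2*e)^DIM('a) * Va) * ((a*e/2)^DIM('b) * Vb)"
    by (rule mult_right_mono[OF m1]) (use Vb assms in auto)
  also have "\<dots> = (2*e)^DIM('a) * Va * (real (card P) * ((a*e/2)^DIM('b) * Vb))"
    by (simp add: algebra_simps)
  also have "\<dots> \<le> (2*e)^DIM('a) * Va * measure lebesgue (nbhd (h`B) (a*e/2))"
    by (rule mult_left_mono[OF m2]) (use Va assms in auto)
  finally show ?thesis unfolding Va_def Vb_def .
qed


lemma ratio_le:
  fixes e MC MB K :: real
  assumes e: "e > 0" and h: "MC * e^n \<le> K * e^m * MB"
  shows "MC / e powr (real m - s) \<le> K * (MB / e powr (real n - s))"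
proof -
  have em: "e powr (real m - s) = e^m / e powr s" and en: "e powr (real n - s) = e^n / e powr s"
    using e by (simp_all add: powr_diff powr_realpow)
  have es: "e powr s > 0" using e by simp
  have "MC * e^n * e powr s \<le> K * e^m * MB * e powr s" using h es by (simp add: mult_right_mono)
  then show ?thesis unfolding em en using e es by (simp add: field_simps)
qed

lemma scale_Limsup: fixes k :: real assumes "k > 0"
  shows "Limsup (at_right 0) (\<lambda>e. g (k*e)) = Limsup (at_right 0) g"
proof -
  have "inj (times k)" using assms by (auto simp: inj_on_def)
  from Limsup_filtermap_eq[OF this, of "at_right 0" g] show ?thesis
    using filtermap_times_pos_at_right[OF assms, of 0] by simp
qed

lemma scale_Liminf: fixes k :: real assumes "k > 0"
  shows "Liminf (at_right 0) (\<lambda>e. g (k*e)) = Liminf (at_right 0) g"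
proof -
  have "inj (times k)" using assms by (auto simp: inj_on_def)
  from Liminf_filtermap_eq[OF this, of "at_right 0" g] show ?thesis
    using filtermap_times_pos_at_right[OF assms, of 0] by simp
qed

lemma mink_nonneg:
  "upper_mink s B \<ge> 0" "lower_mink s B \<ge> 0"
proof -
  have ev: "\<forall>\<^sub>F e in at_right 0. 0 \<le> ereal (measure lebesgue (nbhd B e) / e powr (real DIM('a) - s))"
    using eventually_at_right_less[of "0::real"] by (rule eventually_mono) simp
  show "lower_mink s B \<ge> 0" unfolding lower_mink_def by (rule Liminf_bounded[OF ev])
  show "upper_mink s B \<ge> 0" unfolding upper_mink_def by (rule le_Limsup[OF _ ev]) simp
qed

lemma mink_le_gen:
  fixes B :: "'a::euclidean_space set" and C :: "'b::euclidean_space set"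
  assumes K: "K \<ge> 0" and k: "k > 0"
    and h: "\<And>e. e > 0 \<Longrightarrow> measure lebesgue (nbhd C e) * e^DIM('a) \<le> K * e^DIM('b) * measure lebesgue (nbhd B (k*e))"
  shows "upper_mink s C \<le> ereal (K * k powr (real DIM('a) - s)) * upper_mink s B"
    "lower_mink s C \<le> ereal (K * k powr (real DIM('a) - s)) * lower_mink s B"
proof -
  define fB where "fB e = ereal (measure lebesgue (nbhd B e) / e powr (real DIM('a) - s))" for e
  define fC where "fC e = ereal (measure lebesgue (nbhd C e) / e powr (real DIM('b) - s))" for e
  define c where "c = K * k powr (real DIM('a) - s)"
  have c: "c \<ge> 0" unfolding c_def using K by simp
  have pw: "\<And>e. e > 0 \<Longrightarrow> fC e \<le> ereal c * fB (k*e)"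
  proof -
    fix e :: real assume e: "e > 0"
    have "measure lebesgue (nbhd C e) / e powr (real DIM('b) - s)
       \<le> K * (measure lebesgue (nbhd B (k*e)) / e powr (real DIM('a) - s))"
      by (rule ratio_le[OF e h[OF e]])
    also have "\<dots> = c * (measure lebesgue (nbhd B (k*e)) / (k*e) powr (real DIM('a) - s))"
      unfolding c_def using k e by (simp add: powr_mult field_simps)
    finally show "fC e \<le> ereal c * fB (k*e)" unfolding fB_def fC_def by simp
  qed
  have ev: "\<forall>\<^sub>F e in at_right 0. fC e \<le> ereal c * fB (k*e)"
    using eventually_at_right_less[of "0::real"] by (rule eventually_mono) (rule pw)
  have "Limsup (at_right 0) fC \<le> Limsup (at_right 0) (\<lambda>e. ereal c * fB (k*e))"
    by (rule Limsup_mono[OF ev])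
  also have "\<dots> = ereal c * Limsup (at_right 0) (\<lambda>e. fB (k*e))"
    by (rule Limsup_ereal_mult_left[OF _ c]) simp
  also have "\<dots> = ereal c * Limsup (at_right 0) fB" using scale_Limsup[OF k, where g=fB] by simp
  finally show "upper_mink s C \<le> ereal (K * k powr (real DIM('a) - s)) * upper_mink s B"
    unfolding upper_mink_def fB_def fC_def c_def .
  have "Liminf (at_right 0) fC \<le> Liminf (at_right 0) (\<lambda>e. ereal c * fB (k*e))"
    by (rule Liminf_mono[OF ev])
  also have "\<dots> = ereal c * Liminf (at_right 0) (\<lambda>e. fB (k*e))"
    by (rule Liminf_ereal_mult_left[OF _ c]) simp
  also have "\<dots> = ereal c * Liminf (at_right 0) fB" using scale_Liminf[OF k, where g=fB] by simp
  finally show "lower_mink s C \<le> ereal (K * k powr (real DIM('a) - s)) * lower_mink s B"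
    unfolding lower_mink_def fB_def fC_def c_def .
qed



lemma norm3_sq: "norm (x::real^3)^2 = x$1^2 + x$2^2 + x$3^2"
  by (simp only: power2_norm_eq_inner) (simp add: inner_vec_def sum_3 power2_eq_square)
lemma norm2_sq: "norm (x::real^2)^2 = x$1^2 + x$2^2"
  by (simp only: power2_norm_eq_inner) (simp add: inner_vec_def sum_2 power2_eq_square)

definition wv :: "real^2 \<Rightarrow> real^3" where "wv u = vector [u$1, u$2, 1]"

lemma wv_norm: "norm (wv u)^2 = norm u^2 + 1"
  by (simp add: norm3_sq norm2_sq wv_def)

lemma wv_dist: "dist (wv u) (wv v) = dist u v"
proof -
  have "(dist (wv u) (wv v))^2 = (dist u v)^2"
    by (simp add: dist_norm norm3_sq norm2_sq wv_def)
  then show ?thesis by (rule power2_eq_imp_eq) auto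
qed

lemma inv_norm: "norm (inversion (a::'a::euclidean_space)) = 1 / norm a"
  by (cases "a = 0") (simp_all add: inversion_def power2_eq_square)

lemma inv_dist:
  fixes a b :: "'a::euclidean_space"
  assumes "a \<noteq> 0" "b \<noteq> 0"
  shows "dist (inversion a) (inversion b) = dist a b / (norm a * norm b)"
proof -
  have na: "norm a > 0" and nb: "norm b > 0" using assms by auto
  define x where "x = inversion a"
  define y where "y = inversion b"
  have d1: "(dist x y)^2 = (norm x)^2 + (norm y)^2 - 2 * inner x y"
    using dot_norm_neg[of x y] by (simp add: dist_norm)
  have d2: "inner x y = inner a b / ((norm a)^2 * (norm b)^2)"
    unfolding x_def y_def inversion_def by (simp add: power2_eq_square)
  have d3: "inner a b = ((norm a)^2 + (norm b)^2 - (dist a b)^2) / 2"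
    using dot_norm_neg[of a b] by (simp add: dist_norm)
  have "(dist x y)^2 = 1/(norm a)^2 + 1/(norm b)^2 - 2 * (inner a b / ((norm a)^2 * (norm b)^2))"
    unfolding d1 d2 by (simp add: x_def y_def inv_norm power_divide)
  also have "\<dots> = (dist a b)^2 / (norm a * norm b)^2"
    unfolding d3 using na nb by (simp add: field_simps power2_eq_square)
  finally have sq: "(dist x y)^2 = (dist a b / (norm a * norm b))^2"
    by (simp add: power_divide)
  have "dist x y = dist a b / (norm a * norm b)"
    by (rule power2_eq_imp_eq[OF sq]) (use na nb in auto)
  then show ?thesis unfolding x_def y_def .
qed

definition hh :: "real^2 \<Rightarrow> real^3" where "hh u = inversion (wv u)"

lemma wv_ne0: "wv u \<noteq> 0"
proof
  assume "wv u = 0" then have "(wv u)$3 = 0" by simp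
  then show False by (simp add: wv_def)
qed

lemma hh_dist: "dist (hh u) (hh v) = dist u v / (norm (wv u) * norm (wv v))"
  unfolding hh_def using inv_dist[OF wv_ne0 wv_ne0] wv_dist by simp

lemma wv_norm_ge: "norm (wv u) \<ge> 1"
proof -
  have "norm (wv u)^2 \<ge> 1^2" using wv_norm[of u] by simp
  then show ?thesis by (rule power2_le_imp_le) simp
qed

lemma hh_lip: "dist (hh u) (hh v) \<le> 1 * dist u v"
proof -
  have P: "norm (wv u) * norm (wv v) \<ge> 1 * 1" using wv_norm_ge[of u] wv_norm_ge[of v]
    by (intro mult_mono) auto
  have "dist u v / (norm (wv u) * norm (wv v)) \<le> dist u v / 1"
    by (rule divide_left_mono) (use P in auto)
  then show ?thesis unfolding hh_dist by simp
qed

lemma hh_colip: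
  assumes "norm u \<le> R" "norm v \<le> R"
  shows "(1 / (R^2 + 1)) * dist u v \<le> dist (hh u) (hh v)"
proof -
  have R: "R \<ge> 0" using assms(1) norm_ge_zero order_trans by blast
  have b: "norm (wv x) \<le> sqrt (R^2 + 1)" if "norm x \<le> R" for x
  proof -
    have "norm (wv x)^2 \<le> R^2 + 1" using wv_norm[of x] that power_mono[OF that] by simp
    then show ?thesis by (simp add: real_le_rsqrt)
  qed
  have "norm (wv u) * norm (wv v) \<le> sqrt (R^2+1) * sqrt (R^2+1)"
    using b[OF assms(1)] b[OF assms(2)] by (intro mult_mono) auto
  also have "\<dots> = R^2 + 1" by simp
  finally have le: "norm (wv u) * norm (wv v) \<le> R^2 + 1" .
  have pos: "norm (wv u) * norm (wv v) > 0" using wv_ne0 by simp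
  have "(1 / (R^2 + 1)) * dist u v = dist u v / (R^2+1)" by simp
  also have "\<dots> \<le> dist u v / (norm (wv u) * norm (wv v))"
    by (rule divide_left_mono[OF le]) (use pos in \<open>auto simp: add_nonneg_pos\<close>)
  finally show ?thesis unfolding hh_dist .
qed

lemma hh_bounded: "norm (hh u) \<le> 1"
  unfolding hh_def inv_norm using wv_norm_ge[of u] by (simp add: divide_le_eq)



lemma ereal_facts:
  fixes x y :: ereal
  assumes x0: "x \<ge> 0" and y0: "y \<ge> 0" and a: "a \<ge> 0" and b: "b \<ge> 0"
    and xy: "x \<le> ereal a * y" and yx: "y \<le> ereal b * x"
  shows "x = 0 \<longleftrightarrow> y = 0" "y < \<infinity> \<Longrightarrow> x < \<infinity>" "0 < y \<Longrightarrow> 0 < x"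
proof -
  show "x = 0 \<longleftrightarrow> y = 0" using xy yx x0 y0 by (auto intro: antisym)
  show "y < \<infinity> \<Longrightarrow> x < \<infinity>"
  proof -
    assume "y < \<infinity>"
    then obtain r where "y = ereal r" using y0 by (cases y) auto
    then have "ereal a * y < \<infinity>" by simp
    then show ?thesis using xy le_less_trans by blast
  qed
  show "0 < y \<Longrightarrow> 0 < x"
  proof -
    assume y: "0 < y"
    show "0 < x"
    proof (rule ccontr)
      assume "\<not> 0 < x" then have "x = 0" using x0 by simp
      then have "y \<le> 0" using yx by simp
      with y show False by simp
    qed
  qed
qed

lemma dims_transfer:
  fixes B :: "'a::euclidean_space set" and C :: "'b::euclidean_space set"
  assumes c1: "\<And>s. c1 s \<ge> 0" and c2: "\<And>s. c2 s \<ge> 0"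
    and u1: "\<And>s. upper_mink s C \<le> ereal (c1 s) * upper_mink s B"
    and l1: "\<And>s. lower_mink s C \<le> ereal (c1 s) * lower_mink s B"
    and u2: "\<And>s. upper_mink s B \<le> ereal (c2 s) * upper_mink s C"
    and l2: "\<And>s. lower_mink s B \<le> ereal (c2 s) * lower_mink s C"
  shows "upper_box_dim B = upper_box_dim C \<and> lower_box_dim B = lower_box_dim C
     \<and> (mink_nondeg B \<longrightarrow> mink_nondeg C)"
proof (intro conjI impI)
  note U = ereal_facts[OF mink_nonneg(1) mink_nonneg(1) c1 c2 u1 u2]
  note L = ereal_facts[OF mink_nonneg(2) mink_nonneg(2) c1 c2 l1 l2]
  show "upper_box_dim B = upper_box_dim C" unfolding upper_box_dim_def using U(1) by metis
  show "lower_box_dim B = lower_box_dim C" unfolding lower_box_dim_def using L(1) by metis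
  assume "mink_nondeg B"
  then obtain d where d: "d \<ge> 0" "0 < lower_mink d B" "upper_mink d B < \<infinity>"
    unfolding mink_nondeg_def by blast
  have "lower_mink d C \<le> upper_mink d C"
    unfolding lower_mink_def upper_mink_def by (rule Liminf_le_Limsup) simp
  then show "mink_nondeg C" unfolding mink_nondeg_def using d U(2) L(3) by blast
qed



lemma stereo_eq:
  fixes p :: "real^2"
  defines "n \<equiv> p$1^2 + p$2^2"
  shows "stereo p = vector [p$1/(1+n), p$2/(1+n), n/(1+n)]"
proof -
  have n0: "n \<ge> 0" unfolding n_def by simp
  have n1: "1 + n > 0" using n0 by simp
  define q0 :: "real^3" where "q0 = vector [p$1/(1+n), p$2/(1+n), n/(1+n)]"
  have line: "north + t *\<^sub>R (embed_plane p - north) = (vector [t * p$1, t * p$2, 1 - t] :: real^3)" for t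
    by (simp add: vec_eq_iff forall_3 north_def embed_plane_def algebra_simps)
  have sph: "q \<in> sphereS \<longleftrightarrow> q$1^2 + q$2^2 + (q$3 - 1/2)^2 = (1/2)^2" for q :: "real^3"
  proof -
    have "q \<in> sphereS \<longleftrightarrow> (dist (vector [0,0,1/2]) q)^2 = (1/2)^2"
      unfolding sphereS_def by (auto simp: power2_eq_iff_nonneg)
    also have "(dist (vector [0,0,1/2]) q)^2 = q$1^2 + q$2^2 + (q$3 - 1/2)^2"
      by (simp add: dist_norm norm3_sq power2_commute)
    finally show ?thesis by simp
  qed
  have P0: "q0 \<in> sphereS \<and> q0 \<noteq> north \<and> (\<exists>t::real. q0 = north + t *\<^sub>R (embed_plane p - north))"
  proof (intro conjI)
    have e1: "(p$1/(1+n))^2 + (p$2/(1+n))^2 = n/(1+n)^2"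
      unfolding n_def by (simp add: power_divide add_divide_distrib)
    have f1: "n/(1+n) - 1/2 = (n-1)/(2*(1+n))" using n1 by (simp add: field_simps)
    have f2: "4*n + (n-1)^2 = (1+n)^2" by algebra
    have "n/(1+n)^2 + (n/(1+n) - 1/2)^2 = n/(1+n)^2 + (n-1)^2/(4*(1+n)^2)"
      unfolding f1 by (simp add: power_divide power2_eq_square algebra_simps)
    also have "\<dots> = (4*n + (n-1)^2)/(4*(1+n)^2)" using n1 by (simp add: field_simps)
    also have "\<dots> = (1/2)^2" unfolding f2 using n1 by (simp add: power_divide)
    finally have "n/(1+n)^2 + (n/(1+n) - 1/2)^2 = (1/2)^2" .
    then have "(p$1/(1+n))^2 + (p$2/(1+n))^2 + (n/(1+n) - 1/2)^2 = (1/2)^2" using e1 by simp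
    then show "q0 \<in> sphereS" unfolding sph q0_def by simp
    show "q0 \<noteq> north"
    proof
      assume "q0 = north" then have "q0$3 = north$3" by simp
      then show False using n1 by (simp add: q0_def north_def field_simps)
    qed
    show "\<exists>t::real. q0 = north + t *\<^sub>R (embed_plane p - north)"
      unfolding line using n1 by (intro exI[of _ "1/(1+n)"]) (simp add: q0_def vec_eq_iff forall_3 field_simps)
  qed
  have uniq: "q = q0" if "q \<in> sphereS \<and> q \<noteq> north \<and> (\<exists>t::real. q = north + t *\<^sub>R (embed_plane p - north))" for q
  proof -
    from that obtain t where q: "q = vector [t * p$1, t * p$2, 1 - t]" and qs: "q \<in> sphereS" and qn: "q \<noteq> north"
      unfolding line by blast
    have t0: "t \<noteq> 0" using qn q by (auto simp: north_def)
    have "(t * p$1)^2 + (t * p$2)^2 + (1 - t - 1/2)^2 = (1/2)^2" using qs unfolding sph q by simp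
    then have "t * (t * (1 + n) - 1) = 0" unfolding n_def by (simp add: algebra_simps power2_eq_square)
    with t0 have "t * (1 + n) = 1" by simp
    then have t: "t = 1/(1+n)" using n1 by (simp add: field_simps)
    show ?thesis unfolding q q0_def t using n1 by (simp add: vec_eq_iff forall_3 field_simps)
  qed
  show ?thesis unfolding stereo_def q0_def[symmetric] by (rule the_equality, rule P0, rule uniq, assumption)
qed

lemma hh_inv:
  fixes p :: "real^2"
  assumes "p \<noteq> 0"
  shows "hh (inversion p) = stereo p"
proof -
  define n where "n = p$1^2 + p$2^2"
  have nn: "norm p ^2 = n" unfolding n_def by (rule norm2_sq)
  have n0: "n > 0" using assms nn by (metis zero_less_norm_iff zero_less_power)
  have w: "wv (inversion p) = vector [p$1/n, p$2/n, 1]"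
    unfolding wv_def inversion_def nn by simp
  have nw: "norm (wv (inversion p))^2 = 1/n + 1"
  proof -
    have "(p$1/n)^2 + (p$2/n)^2 = n / n^2" unfolding n_def by (simp add: power_divide add_divide_distrib)
    then show ?thesis unfolding w norm3_sq using n0 by (simp add: power2_eq_square)
  qed
  have c: "1 / (1/n + 1) = n/(1+n)" using n0 by (simp add: field_simps)
  show ?thesis
    unfolding hh_def stereo_eq inversion_def[of "wv (inversion p)"] nw
    unfolding w n_def[symmetric] c using n0
    by (simp add: vec_eq_iff forall_3)
qed



theorem proposition2p21:
  fixes A :: "(real^2) set"
  assumes "\<not> bounded A" and "0 \<notin> closure A"
  shows "upper_box_dim_unb A = upper_box_dim (stereo ` A)
     \<and> lower_box_dim_unb A = lower_box_dim (stereo ` A)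
     \<and> (mink_nondeg_unb A \<longrightarrow> mink_nondeg (stereo ` A))"
proof -
  obtain r where r: "r > 0" "\<forall>p\<in>A. r \<le> norm p"
    using assms(2) unfolding closure_approachable by (force simp: not_less dist_norm)
  define B where "B = inversion ` A"
  define R where "R = 1 / r"
  have A0: "\<forall>p\<in>A. p \<noteq> 0" using r by force
  have Bn: "\<forall>u\<in>B. norm u \<le> R"
  proof
    fix u assume "u \<in> B"
    then obtain p where p: "p \<in> A" "u = inversion p" unfolding B_def by blast
    have np: "r \<le> norm p" using r p(1) by blast
    have "norm u = 1 / norm p" unfolding p(2) inv_norm ..
    also have "1 / norm p \<le> 1 / r" by (rule divide_left_mono[OF np]) (use r np in \<open>auto intro!: mult_pos_pos\<close>)
    finally show "norm u \<le> R" unfolding R_def .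
  qed
  have bB: "bounded B" using Bn bounded_iff by blast
  have CB: "stereo ` A = hh ` B" unfolding B_def image_image using A0 hh_inv
    by (intro image_cong) auto
  have bC: "bounded (hh ` B)" using hh_bounded bounded_iff by blast
  define a where "a = 1 / (R^2 + 1)"
  have a: "a > 0" unfolding a_def by (simp add: add_nonneg_pos)
  have lip: "\<forall>u\<in>B. \<forall>v\<in>B. dist (hh u) (hh v) \<le> 1 * dist u v" using hh_lip by blast
  have colip: "\<forall>u\<in>B. \<forall>v\<in>B. a * dist u v \<le> dist (hh u) (hh v)"
    unfolding a_def using Bn hh_colip by blast
  define Va where "Va = measure lebesgue (ball (0::real^2) 1)"
  define Vb where "Vb = measure lebesgue (ball (0::real^3) 1)"
  have Va: "Va > 0" and Vb: "Vb > 0" unfolding Va_def Vb_def by (rule ball_meas_pos)+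
  define K1 where "K1 = (1+1)^DIM(real^3) * Vb * 2^DIM(real^2) / Va"
  have K1: "K1 \<ge> 0" unfolding K1_def using Va Vb by simp
  have up: "measure lebesgue (nbhd (hh`B) e) * e^DIM(real^2) \<le> K1 * e^DIM(real^3) * measure lebesgue (nbhd B (1*e))"
    if "e > 0" for e
    using cmp_up[OF bB _ lip that] unfolding K1_def Va_def Vb_def by simp
  define K2 where "K2 = 2^DIM(real^2) * Va / ((a/2)^DIM(real^3) * Vb)"
  have K2: "K2 \<ge> 0" unfolding K2_def using Va Vb a by simp
  have down: "measure lebesgue (nbhd B e) * e^DIM(real^3) \<le> K2 * e^DIM(real^2) * measure lebesgue (nbhd (hh`B) ((a/2)*e))"
    if e: "e > 0" for e
  proof -
    have h: "measure lebesgue (nbhd B e) * ((a*e/2)^DIM(real^3) * Vb) \<le>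
      (2*e)^DIM(real^2) * Va * measure lebesgue (nbhd (hh`B) (a*e/2))"
      using cmp_down[OF bB a colip e bC] unfolding Va_def Vb_def .
    have pos: "(a/2)^DIM(real^3) * Vb > 0" using a Vb by simp
    have "measure lebesgue (nbhd B e) * e^DIM(real^3) * ((a/2)^DIM(real^3) * Vb)
       = measure lebesgue (nbhd B e) * ((a*e/2)^DIM(real^3) * Vb)"
      by (simp add: power_mult_distrib power_divide)
    also have "\<dots> \<le> (2*e)^DIM(real^2) * Va * measure lebesgue (nbhd (hh`B) (a*e/2))" by (rule h)
    also have "\<dots> = (2^DIM(real^2) * Va) * e^DIM(real^2) * measure lebesgue (nbhd (hh`B) ((a/2)*e))"
      by (simp add: power_mult_distrib algebra_simps)
    also have "2^DIM(real^2) * Va = K2 * ((a/2)^DIM(real^3) * Vb)"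
      unfolding K2_def using pos a Vb by simp
    also have "K2 * ((a/2)^DIM(real^3) * Vb) * e^DIM(real^2) * measure lebesgue (nbhd (hh`B) ((a/2)*e))
       = (K2 * e^DIM(real^2) * measure lebesgue (nbhd (hh`B) ((a/2)*e))) * ((a/2)^DIM(real^3) * Vb)"
      by (simp only: ac_simps)
    finally show ?thesis using pos by (simp only: mult_le_cancel_right_pos)
  qed
  note M1 = mink_le_gen[where B=B and C="hh`B", OF K1 zero_less_one up]
  note M2 = mink_le_gen[where B="hh`B" and C=B, OF K2 _ down]
  have a2: "a/2 > 0" using a by simp
  have T: "upper_box_dim B = upper_box_dim (hh`B) \<and> lower_box_dim B = lower_box_dim (hh`B)
     \<and> (mink_nondeg B \<longrightarrow> mink_nondeg (hh`B))"
    by (rule dims_transfer[OF _ _ M1(1) M1(2) M2(1)[OF a2] M2(2)[OF a2]]) (use K1 K2 in simp_all)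
  show ?thesis unfolding upper_box_dim_unb_def lower_box_dim_unb_def mink_nondeg_unb_def
    B_def[symmetric] CB using T by blast
qed


end
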